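(* For $k\in\mathbb{N}$ let $B(k)=\dfrac{2}{3}\cdot\dfrac{k-1}{(2k+1)!}$. (i) For every $x\in(0,\pi/2)$ and every $n\in\mathbb{N}$, $$\sum_{k=2}^{2n}(-1)^{k+1}B(k)\,x^{2k}<\frac{\sin x}{x}-\frac{\cos x+2}{3}<\sum_{k=2}^{2n+1}(-1)^{k+1}B(k)\,x^{2k}.$$ (ii) For every $x\in(0,\pi/2)$ and every $m\in\mathbb{N}$, $$\Big|\frac{\sin x}{x}-\frac{\cos x+2}{3}-\sum_{k=2}^{m}(-1)^{k+1}B(k)\,x^{2k}\Big|<B(m+1)\,x^{2m+2},$$ where the sum is empty (equal to $0$) when $m=1$.
   Context: $\mathbb{N}=\{1,2,3,\dots\}$. *)

theory Defs
  imports Complex_Main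
begin

definition B :: "nat \<Rightarrow> real" where
  "B k = (2/3) * ((real k - 1) / fact (2*k+1))"

end

theory Submission
  imports Defs
begin

lemma alt_pos:
  fixes d :: "nat \<Rightarrow> real"
  assumes s: "(\<lambda>i. (-1)^i * d i) sums S" and dec: "\<And>i. d (Suc i) < d i"
  shows "0 < S"
proof -
  have g: "(\<lambda>n. \<Sum>i=n*2..<n*2+2. (-1)^i * d i) sums S"
    using sums_group[OF s, of 2] by simp
  have eq: "(\<Sum>i=n*2..<n*2+2. (-1)^i * d i) = d (2*n) - d (Suc (2*n))" for n
  proof -
    have "(-1::real)^(n+n) = 1" by (simp flip: mult_2)
    then show ?thesis by (simp add: numeral_2_eq_2 mult.commute)
  qed
  have h: "(\<lambda>n. d (2*n) - d (Suc (2*n))) sums S" using g unfolding eq .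
  have p: "\<And>n. 0 < d (2*n) - d (Suc (2*n))" using dec by (simp add: less_imp_le)
  have "0 < (\<Sum>n. d (2*n) - d (Suc (2*n)))"
    by (rule suminf_pos[OF sums_summable[OF h] p])
  then show ?thesis using sums_unique[OF h] by simp
qed

lemma alt_both:
  fixes d :: "nat \<Rightarrow> real"
  assumes s: "(\<lambda>i. (-1)^i * d i) sums S" and dec: "\<And>i. d (Suc i) < d i"
  shows "0 < S \<and> S < d 0"
proof -
  have "(\<lambda>i. (-1)^(i+1) * d (i+1)) sums (S - d 0)"
    using sums_iff_shift[of "\<lambda>i. (-1)^i * d i" 1 "S - d 0"] s by simp
  then have "(\<lambda>i. (-1)^i * d (Suc i)) sums (d 0 - S)"
    using sums_minus by fastforce
  then have "0 < d 0 - S" by (rule alt_pos) (use dec in auto)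
  with alt_pos[OF s dec] show ?thesis by simp
qed

lemma alt_tail:
  fixes d :: "nat \<Rightarrow> real"
  assumes s: "(\<lambda>i. (-1)^i * d i) sums S" and dec: "\<And>i. d (Suc i) < d i"
  shows "0 < (-1)^N * (S - (\<Sum>i<N. (-1)^i * d i)) \<and>
         (-1)^N * (S - (\<Sum>i<N. (-1)^i * d i)) < d N"
proof -
  have "(\<lambda>i. (-1)^(i+N) * d (i+N)) sums (S - (\<Sum>i<N. (-1)^i * d i))"
    using sums_iff_shift[of "\<lambda>i. (-1)^i * d i" N "S - (\<Sum>i<N. (-1)^i * d i)"] s by simp
  then have "(\<lambda>i. (-1)^N * ((-1)^(i+N) * d (i+N))) sums ((-1)^N * (S - (\<Sum>i<N. (-1)^i * d i)))"
    by (rule sums_mult)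
  moreover have "(-1)^N * ((-1)^(i+N) * d (i+N)) = (-1)^i * d (i+N)" for i :: nat
    by (simp add: power_add)
  ultimately have "(\<lambda>i. (-1)^i * d (i+N)) sums ((-1)^N * (S - (\<Sum>i<N. (-1)^i * d i)))"
    by simp
  from alt_both[OF this] dec show ?thesis by simp
qed

lemma alg0: "(0::real) < a \<Longrightarrow> 0 < F \<Longrightarrow> a = 2*b+3 \<Longrightarrow> s/(a*F)*P - s/F*P/3 = -(s*((2/3)*(b/(a*F)))*P)"
proof -
  assume h: "(0::real) < a" "0 < F" "a = 2*b+3"
  have "s/(a*F)*P - s/F*P/3 = s*P*(3-a)/(3*a*F)" using h(1,2) by (simp add: field_simps)
  also have "... = -(s*((2/3)*(b/(a*F)))*P)" using h(3) by (simp add: field_simps)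
  finally show ?thesis .
qed

lemma main_series:
  fixes x :: real
  assumes "x \<noteq> 0"
  shows "(\<lambda>j. (-1)^j * (B (j+2) * x^(2*(j+2)))) sums (-(sin x / x - (cos x + 2)/3))"
proof -
  have s1: "(\<lambda>n. (- 1) ^ n / (fact (2 * n + 1)) * x ^ (2 * n + 1) / x) sums (sin x / x)"
    using sums_divide[OF sin_paired] .
  have s2: "(\<lambda>n. (- 1) ^ n / (fact (2 * n)) * x ^ (2 * n) / 3) sums (cos x / 3)"
    using sums_divide[OF cos_paired] .
  have s3: "(\<lambda>n. (- 1) ^ n / (fact (2 * n + 1)) * x ^ (2 * n + 1) / x
             - (- 1) ^ n / (fact (2 * n)) * x ^ (2 * n) / 3) sums (sin x / x - cos x / 3)"
    by (rule sums_diff[OF s1 s2])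
  define g where "g n = (- 1) ^ n / (fact (2 * n + 1)) * x ^ (2 * n + 1) / x
             - (- 1) ^ n / (fact (2 * n)) * x ^ (2 * n) / 3" for n
  have sg: "g sums (sin x / x - cos x / 3)" using s3 unfolding g_def .
  have g0: "g 0 = 2/3" using assms by (simp add: g_def)
  have g1: "g 1 = 0" using assms by (simp add: g_def power2_eq_square power3_eq_cube field_simps)
  have alg: "s / ((2*real j+5) * F) * P - s / F * P / 3 = - (s * ((2/3) * ((real (j+2) - 1) / ((2*real j+5) * F))) * P)"
    if "F > 0" for s F P :: real and j :: nat
  proof -
    have a: "(0::real) < 2*real j+5" by simp
    have "2*real j+5 = 2*(real (j+2) - 1) + 3" by simp
    from alg0[OF a that this] show ?thesis by (simp add: mult.assoc)
  qed
  have gj: "g (j+2) = - ((-1)^j * (B (j+2) * x^(2*(j+2))))" for j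
  proof -
    define F :: real where "F = fact (2*(j+2))"
    define P where "P = x^(2*(j+2))"
    have Fp: "F > 0" unfolding F_def by simp
    have f: "fact (2*(j+2)+1) = (2*real j+5) * F"
    proof -
      have "2 * (j + 2) + 1 = Suc (2*(j+2))" by simp
      then have "fact (2 * (j + 2) + 1) = (real (Suc (2*(j+2)))) * (fact (2 * (j + 2))::real)"
        by (simp only: fact_Suc of_nat_mult)
      then show ?thesis unfolding F_def by simp
    qed
    have xx: "x^(2*(j+2)+1) = P * x" unfolding P_def by simp
    have sg: "(-1::real)^(j+2) = (-1)^j" by simp
    have "g (j+2) = (-1)^(j+2) / fact (2*(j+2)+1) * x^(2*(j+2)+1) / x - (-1)^(j+2) / fact (2*(j+2)) * x^(2*(j+2)) / 3"
      unfolding g_def by simp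
    also have "... = (-1)^j / ((2*real j+5) * F) * P - (-1)^j / F * P / 3"
      unfolding f xx sg F_def[symmetric] P_def[symmetric] using assms by simp
    also have "... = - ((-1)^j * ((2/3) * ((real (j+2) - 1) / ((2*real j+5) * F))) * P)"
      by (rule alg[OF Fp])
    finally show ?thesis unfolding B_def f P_def[symmetric] by (simp only: mult.assoc)
  qed
  have "(\<lambda>j. g (j+2)) sums (sin x / x - cos x / 3 - (\<Sum>i<2. g i))"
    using sums_iff_shift[of g 2] sg by simp
  also have "(\<Sum>i<2. g i) = 2/3" using g0 g1 by (simp add: numeral_2_eq_2)
  finally have "(\<lambda>j. - ((-1)^j * (B (j+2) * x^(2*(j+2))))) sums (sin x / x - cos x / 3 - 2/3)"
    unfolding gj .
  moreover have "sin x / x - cos x / 3 - 2/3 = sin x / x - (cos x + 2)/3" by (simp add: field_simps)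
  ultimately have "(\<lambda>j. - ((-1)^j * (B (j+2) * x^(2*(j+2))))) sums (sin x / x - (cos x + 2)/3)" by simp
  from sums_minus[OF this] show ?thesis by simp
qed

lemma ineq0:
  fixes a b c y F P :: real
  assumes "F > 0" "P > 0" "a > 0" "b * y < c * a"
  shows "(2/3)*(b/(a*F))*(y*P) < (2/3)*(c/F)*P"
proof -
  have "b*y/a < c" using assms by (simp add: divide_less_eq)
  then have "(2/3*P/F) * (b*y/a) < (2/3*P/F) * c" using assms by (intro mult_strict_left_mono) auto
  then show ?thesis by (simp add: field_simps)
qed

lemma dec_c:
  fixes x :: real
  assumes "0 < x" "x < pi/2"
  shows "B (Suc j + 2) * x^(2*(Suc j+2)) < B (j+2) * x^(2*(j+2))"
proof -
  have x2': "x < 2" using assms pi_less_4 by linarith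
  have x2: "x^2 < 2^2" by (rule power_strict_mono) (use x2' assms in auto)
  define F :: real where "F = fact (2*(j+2)+1)"
  define P where "P = x^(2*(j+2))"
  have f: "fact (2*(Suc j+2)+1) = (2*real j+7) * (2*real j+6) * F"
  proof -
    have "2*(Suc j+2)+1 = Suc (Suc (2*(j+2)+1))" by simp
    then have "fact (2*(Suc j+2)+1) = real (Suc (Suc (2*(j+2)+1))) * (real (Suc (2*(j+2)+1)) * (fact (2*(j+2)+1) :: real))"
      by (simp only: fact_Suc of_nat_mult)
    then show ?thesis unfolding F_def by (simp add: algebra_simps)
  qed
  have xp: "x^(2*(Suc j+2)) = x^2 * P" unfolding P_def by (simp add: power_add[symmetric])
  have pf: "0 < F" unfolding F_def by simp
  have px: "0 < P" unfolding P_def using assms by simp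
  have key: "(real j + 2) * x^2 < (real j + 1) * ((2*real j+7) * (2*real j+6))"
  proof -
    have "(real j + 2) * x^2 \<le> (real j + 2) * 4" using x2 by (intro mult_left_mono) auto
    also have "... < (real j + 1) * ((2*real j+7) * (2*real j+6))"
    proof -
      have e: "(real j + 1) * ((2*real j+7) * (2*real j+6)) - (real j+2)*4 = 4*real j^3 + 30*real j^2 + 64*real j + 34"
        by (simp add: algebra_simps power2_eq_square power3_eq_cube)
      have "(0::real) \<le> real j" "(0::real) \<le> real j^2" "(0::real) \<le> real j^3" by simp_all
      then show ?thesis using e by linarith
    qed
    finally show ?thesis .
  qed
  have lhs: "B (Suc j + 2) * x^(2*(Suc j+2)) =
        (2/3) * ((real j + 2) / (((2*real j+7) * (2*real j+6)) * F)) * (x^2 * P)"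
    unfolding B_def f xp by (simp add: mult.assoc)
  have rhs: "B (j+2) * x^(2*(j+2)) = (2/3) * ((real j + 1) / F) * P"
    unfolding B_def F_def[symmetric] P_def[symmetric] by simp
  have a: "0 < (2*real j+7) * (2*real j+6)" by simp
  show ?thesis unfolding lhs rhs by (rule ineq0[OF pf px a key])
qed

lemma reidx: "(\<Sum>k=2..m. h k) = (\<Sum>j<m-1. h (j+2))" for h :: "nat \<Rightarrow> real"
proof (rule sum.reindex_bij_witness[where j="\<lambda>k. k - 2" and i="\<lambda>j. j+2"])
  fix a assume "a \<in> {2..m}"
  then have "a - 2 + 2 = a" by auto
  then show "h (a - 2 + 2) = h a" by simp
qed auto

theorem theorem2:
  shows "(\<forall>x::real. \<forall>n::nat. 0 < x \<and> x < pi/2 \<and> n \<ge> 1 \<longrightarrow>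
            (\<Sum>k=2..2*n. (-1)^(k+1) * B k * x^(2*k)) < sin x / x - (cos x + 2)/3
          \<and> sin x / x - (cos x + 2)/3 < (\<Sum>k=2..2*n+1. (-1)^(k+1) * B k * x^(2*k)))
       \<and> (\<forall>x::real. \<forall>m::nat. 0 < x \<and> x < pi/2 \<and> m \<ge> 1 \<longrightarrow>
            \<bar>sin x / x - (cos x + 2)/3 - (\<Sum>k=2..m. (-1)^(k+1) * B k * x^(2*k))\<bar>
              < B (m+1) * x^(2*m+2))"
proof -
  have gen: "0 < (-1)^(m-1) * (- (sin x / x - (cos x + 2)/3 - (\<Sum>k=2..m. (-1)^(k+1) * B k * x^(2*k))))
      \<and> (-1)^(m-1) * (- (sin x / x - (cos x + 2)/3 - (\<Sum>k=2..m. (-1)^(k+1) * B k * x^(2*k))))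
         < B (m+1) * x^(2*m+2)"
    if x: "0 < x" "x < pi/2" and m: "m \<ge> 1" for x :: real and m :: nat
  proof -
    define c where "c j = B (j+2) * x^(2*(j+2))" for j
    have s: "(\<lambda>j. (-1)^j * c j) sums (-(sin x / x - (cos x + 2)/3))"
      unfolding c_def using main_series x by simp
    have d: "\<And>j. c (Suc j) < c j" unfolding c_def using dec_c x by blast
    have sum: "(\<Sum>k=2..m. (-1)^(k+1) * B k * x^(2*k)) = - (\<Sum>j<m-1. (-1)^j * c j)"
    proof -
      have "(\<Sum>k=2..m. (-1)^(k+1) * B k * x^(2*k)) = (\<Sum>j<m-1. (-1)^(j+2+1) * B (j+2) * x^(2*(j+2)))"
        by (rule reidx)
      also have "... = - (\<Sum>j<m-1. (-1)^j * c j)"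
        unfolding c_def by (simp add: sum_negf mult.assoc)
      finally show ?thesis .
    qed
    have cm: "c (m-1) = B (m+1) * x^(2*m+2)" unfolding c_def using m
      by (simp add: algebra_simps)
    have "- (sin x / x - (cos x + 2)/3 - (\<Sum>k=2..m. (-1)^(k+1) * B k * x^(2*k)))
          = (-(sin x / x - (cos x + 2)/3)) - (\<Sum>j<m-1. (-1)^j * c j)"
      unfolding sum by simp
    then show ?thesis using alt_tail[OF s d, of "m-1"] cm by simp
  qed
  show ?thesis
  proof (intro conjI allI impI)
    fix x :: real and m :: nat
    assume a: "0 < x \<and> x < pi/2 \<and> m \<ge> 1"
    from gen[of x m] a show "\<bar>sin x / x - (cos x + 2)/3 - (\<Sum>k=2..m. (-1)^(k+1) * B k * x^(2*k))\<bar>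
              < B (m+1) * x^(2*m+2)"
      by (cases "even (m-1)") (auto simp: abs_if)
  next
    fix x :: real and n :: nat
    assume a: "0 < x \<and> x < pi/2 \<and> n \<ge> 1"
    have o: "odd (2*n-1)" using a by (cases n) auto
    have e: "(2*n+1) - 1 = 2*n" by simp
    from gen[of x "2*n"] a o show "(\<Sum>k=2..2*n. (-1)^(k+1) * B k * x^(2*k)) < sin x / x - (cos x + 2)/3"
      by simp
    from gen[of x "2*n+1"] a e show "sin x / x - (cos x + 2)/3 < (\<Sum>k=2..2*n+1. (-1)^(k+1) * B k * x^(2*k))"
      by simp
  qed
qed

end
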